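(* Let $m\ge1$ and consider a preferential (dynamic) attachment circuit of index $m$. For $0\le j\le n$ let $D^{(m)}_{n,j}$ be the degree (indegree plus outdegree, edges counted with multiplicity) of node $j$ at time $n$. Then for $n\ge j$, $$\mathbb{E}\bigl[D^{(m)}_{n,j}\bigr]=\frac{\Gamma(n+1)\,\Gamma\bigl(j+\frac1{m+1}\bigr)}{\Gamma\bigl(n+\frac1{m+1}\bigr)\,\Gamma(j+1)}-1+m(1-\delta_{j,0}),$$ and $$\mathbb{V}\mathrm{ar}\bigl[D^{(m)}_{n,j}\bigr]=\frac{\Gamma(n+1)}{((m+1)j+1)\,\Gamma^2\bigl(n+\frac1{m+1}\bigr)\,\Gamma^2(j+1)\,\Gamma\bigl(n+\frac2{m+1}\bigr)}\times\Bigl\{2((m+1)n+1)\,\Gamma(j+1)\,\Gamma^2\bigl(n+\tfrac1{m+1}\bigr)\,\Gamma\bigl(j+\tfrac2{m+1}\bigr)$$ $$-((m+1)j+1)\Bigl[\Gamma(n+1)\,\Gamma\bigl(n+\tfrac2{m+1}\bigr)\,\Gamma^2\bigl(j+\tfrac1{m+1}\bigr)+\Gamma\bigl(n+\tfrac2{m+1}\bigr)\,\Gamma\bigl(n+\tfrac1{m+1}\bigr)\,\Gamma(j+1)\,\Gamma\bigl(j+\tfrac1{m+1}\bigr)\Bigr]\Bigr\}.$$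
   Context: Preferential (dynamic) attachment circuit of index $m\ge1$: at time $0$ there is a single node labeled $0$. At each time $n\ge1$ a new node labeled $n$ is added and $m$ parents are chosen for it one at a time, with replacement, among nodes $0,\dots,n-1$. Before the $(i+1)$-th choice ($i=0,\dots,m-1$), each existing node $v$ is chosen with probability $\frac{d_i(v)+1}{\sum_{x}(d_i(x)+1)}$, where $d_i(x)$ is the outdegree of $x$ in the current multigraph including the edges created by the first $i$ choices for node $n$; after each choice an edge from the chosen parent to node $n$ is immediately added (multi-edges allowed). $\delta_{j,0}$ is the Kronecker delta. *)

theory Defs
  imports "HOL-Probability.Probability" "HOL-Analysis.Analysis"
begin

text \<open>A multigraph is a multiset of directed edges (parent, child).\<close>
type_synonym graph = "(nat \<times> nat) multiset"

definition outdeg :: "graph \<Rightarrow> nat \<Rightarrow> nat" where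
  "outdeg E v = size (filter_mset (\<lambda>e. fst e = v) E)"

definition indeg :: "graph \<Rightarrow> nat \<Rightarrow> nat" where
  "indeg E v = size (filter_mset (\<lambda>e. snd e = v) E)"

definition degree :: "graph \<Rightarrow> nat \<Rightarrow> nat" where
  "degree E v = indeg E v + outdeg E v"

text \<open>Choose a parent among nodes 0..k-1, node v with probability
  (outdeg v + 1) / sum_x (outdeg x + 1): uniform draw from the multiset in which
  v occurs outdeg v + 1 times.\<close>
definition choose_parent :: "nat \<Rightarrow> graph \<Rightarrow> nat pmf" where
  "choose_parent k E = pmf_of_multiset (\<Sum>v\<in>{0..<k}. replicate_mset (outdeg E v + 1) v)"

fun add_edges :: "nat \<Rightarrow> graph \<Rightarrow> nat \<Rightarrow> graph pmf" where
  "add_edges k E 0 = return_pmf E"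
| "add_edges k E (Suc i) =
     add_edges k E i \<bind> (\<lambda>E'. map_pmf (\<lambda>v. add_mset (v, k) E') (choose_parent k E'))"

fun pac :: "nat \<Rightarrow> nat \<Rightarrow> graph pmf" where
  "pac m 0 = return_pmf {#}"
| "pac m (Suc n) = pac m n \<bind> (\<lambda>E. add_edges (Suc n) E m)"

end

theory Submission
  imports Defs
begin

lemma Gp1: "(x::real) > 0 \<Longrightarrow> Gamma (x + 1) = x * Gamma x"
  by (rule Gamma_plus1) (auto simp: nonpos_Ints_def)

lemma exp_cong: "(\<And>x. x\<in>set_pmf p \<Longrightarrow> f x = g x) \<Longrightarrow> measure_pmf.expectation p f = (measure_pmf.expectation p g :: real)"
  by (rule integral_cong_AE) (auto simp: AE_measure_pmf_iff)

lemma exp_bind: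
  fixes h :: "'b \<Rightarrow> real"
  assumes "finite (set_pmf p)" "\<And>x. x \<in> set_pmf p \<Longrightarrow> finite (set_pmf (f x))"
  shows "measure_pmf.expectation (p \<bind> f) h = measure_pmf.expectation p (\<lambda>x. measure_pmf.expectation (f x) h)"
  using assms by (subst pmf_expectation_bind[of "set_pmf p"], simp_all, subst integral_measure_pmf[of "set_pmf p"]) auto

lemma outdeg_add: "outdeg (add_mset e E) j = outdeg E j + (if fst e = j then 1 else 0)"
  by (simp add: outdeg_def)
lemma outdeg_plus: "outdeg (A + B) j = outdeg A j + outdeg B j" by (simp add: outdeg_def)
lemma indeg_plus: "indeg (A + B) j = indeg A j + indeg B j" by (simp add: indeg_def)

lemma sum_outdeg: "\<forall>e\<in>#E. fst e < k \<Longrightarrow> (\<Sum>v<k. outdeg E v) = size E"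
proof (induction E)
  case empty then show ?case by (simp add: outdeg_def)
next
  case (add e E)
  then have "(\<Sum>v<k. outdeg (add_mset e E) v) = (\<Sum>v<k. outdeg E v) + (\<Sum>v<k. if fst e = v then 1 else 0)"
    by (simp add: outdeg_add sum.distrib)
  also have "\<dots> = size E + 1" using add by simp
  finally show ?case by simp
qed

abbreviation CM :: "nat \<Rightarrow> graph \<Rightarrow> nat multiset" where
  "CM k E \<equiv> (\<Sum>v\<in>{0..<k}. replicate_mset (outdeg E v + 1) v)"

lemma count_CM: "count (CM k E) j = (if j < k then outdeg E j + 1 else 0)"
  by (simp add: count_sum count_replicate_mset if_distrib cong: if_cong)

lemma CM_ne: "0 < k \<Longrightarrow> CM k E \<noteq> {#}"
  by (metis count_CM count_empty add_gr_0 less_numeral_extra(1) less_numeral_extra(3))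

lemma set_CM: "x \<in># CM k E \<Longrightarrow> x < k"
  by (metis count_CM count_eq_zero_iff)

lemma size_CM: "\<forall>e\<in>#E. fst e < k \<Longrightarrow> size (CM k E) = size E + k"
proof -
  assume h: "\<forall>e\<in>#E. fst e < k"
  have "size (CM k E) = (\<Sum>v<k. outdeg E v + 1)" by (simp add: atLeast0LessThan del: replicate_mset_Suc)
  also have "\<dots> = size E + k" using sum_outdeg[OF h] by (simp only: sum.distrib) simp
  finally show ?thesis .
qed

lemma set_cp: "0 < k \<Longrightarrow> set_pmf (choose_parent k E) = set_mset (CM k E)"
  unfolding choose_parent_def by (rule set_pmf_of_multiset[OF CM_ne])

lemma set_cp_lt: "0 < k \<Longrightarrow> v \<in> set_pmf (choose_parent k E) \<Longrightarrow> v < k"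
  using set_cp set_CM by blast

lemma fin_cp: "0 < k \<Longrightarrow> finite (set_pmf (choose_parent k E))"
  by (simp only: set_cp) simp

lemma pmf_cp: "0 < k \<Longrightarrow> j < k \<Longrightarrow> \<forall>e\<in>#E. fst e < k \<Longrightarrow> pmf (choose_parent k E) j = real (outdeg E j + 1) / real (size E + k)"
  unfolding choose_parent_def by (simp only: pmf_of_multiset[OF CM_ne] count_CM size_CM) simp

lemma exp_step:
  fixes f :: "nat \<Rightarrow> real"
  assumes "0<k" "j<k" "\<forall>e\<in>#E. fst e < k"
  shows "measure_pmf.expectation (choose_parent k E) (\<lambda>v. f (outdeg (add_mset (v,k) E) j))
     = f (outdeg E j) + (real (outdeg E j + 1) / real (size E + k)) * (f (outdeg E j + 1) - f (outdeg E j))"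
proof -
  let ?p = "choose_parent k E"
  have fin: "finite (set_pmf ?p)" using fin_cp[OF assms(1)] .
  have "measure_pmf.expectation ?p (\<lambda>v. f (outdeg (add_mset (v,k) E) j))
      = measure_pmf.expectation ?p (\<lambda>v. f (outdeg E j) + (if v = j then f (outdeg E j + 1) - f (outdeg E j) else 0))"
    by (rule exp_cong) (simp add: outdeg_add)
  also have "\<dots> = f (outdeg E j) + measure_pmf.expectation ?p (\<lambda>v. if v = j then f (outdeg E j + 1) - f (outdeg E j) else 0)"
    by (subst Bochner_Integration.integral_add) (auto intro: integrable_measure_pmf_finite[OF fin])
  also have "measure_pmf.expectation ?p (\<lambda>v. if v = j then f (outdeg E j + 1) - f (outdeg E j) else 0)
     = (f (outdeg E j + 1) - f (outdeg E j)) * pmf ?p j"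
    by (subst integral_measure_pmf_real[of "{j}"]) (auto split: if_splits)
  also have "pmf ?p j = real (outdeg E j + 1) / real (size E + k)"
    using pmf_cp assms by blast
  finally show ?thesis by simp
qed

lemma add_edges_finite: "0 < k \<Longrightarrow> finite (set_pmf (add_edges k E i))"
  by (induction i) (auto simp: fin_cp)

lemma add_edges_supp: "0<k \<Longrightarrow> E' \<in> set_pmf (add_edges k E i) \<Longrightarrow>
   \<exists>A. E' = E + A \<and> size A = i \<and> (\<forall>e\<in>#A. snd e = k \<and> fst e < k)"
proof (induction i arbitrary: E')
  case 0 then show ?case by simp
next
  case (Suc i)
  then obtain E'' v where E'': "E'' \<in> set_pmf (add_edges k E i)" and v: "v < k"
    and E': "E' = add_mset (v,k) E''"
  proof -
    from Suc.prems(2) obtain E'' where E'': "E'' \<in> set_pmf (add_edges k E i)"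
      and "E' \<in> set_pmf (map_pmf (\<lambda>v. add_mset (v, k) E'') (choose_parent k E''))"
      by (auto simp only: add_edges.simps set_bind_pmf)
    then obtain v where "v \<in> set_pmf (choose_parent k E'')" "E' = add_mset (v,k) E''" by auto
    with E'' set_cp_lt[OF Suc.prems(1)] show thesis using that by blast
  qed
  from Suc.IH[OF Suc.prems(1) E''] obtain A where A: "E'' = E + A" "size A = i" "\<forall>e\<in>#A. snd e = k \<and> fst e < k" by blast
  show ?case
    by (rule exI[of _ "add_mset (v,k) A"]) (use A E' v in auto)
qed

lemma add_edges_size: "0<k \<Longrightarrow> E' \<in> set_pmf (add_edges k E i) \<Longrightarrow> size E' = size E + i"
proof -
  assume "0<k" "E' \<in> set_pmf (add_edges k E i)"
  from add_edges_supp[OF this] obtain A where "E' = E + A" "size A = i" by blast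
  then show ?thesis by simp
qed

lemma add_edges_fst: "0<k \<Longrightarrow> \<forall>e\<in>#E. fst e < k \<Longrightarrow> E' \<in> set_pmf (add_edges k E i) \<Longrightarrow> \<forall>e\<in>#E'. fst e < k"
proof -
  assume a: "0<k" "\<forall>e\<in>#E. fst e < k" "E' \<in> set_pmf (add_edges k E i)"
  from add_edges_supp[OF a(1,3)] obtain A where "E' = E + A" "\<forall>e\<in>#A. snd e = k \<and> fst e < k" by blast
  then show ?thesis using a(2) by auto
qed

lemma add_edges_gen:
  fixes f :: "nat \<Rightarrow> real" and c :: "nat \<Rightarrow> real"
  assumes "0<k" "j<k" "\<forall>e\<in>#E. fst e < k"
    and step: "\<And>x t. f x + (real (x + 1) / real (size E + k + t)) * (f (x + 1) - f x) = f x * c t"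
  shows "measure_pmf.expectation (add_edges k E i) (\<lambda>E'. f (outdeg E' j)) = f (outdeg E j) * (\<Prod>t<i. c t)"
proof (induction i)
  case 0 then show ?case by simp
next
  case (Suc i)
  have fin: "finite (set_pmf (add_edges k E i))" using add_edges_finite[OF assms(1)] .
  have "measure_pmf.expectation (add_edges k E (Suc i)) (\<lambda>E'. f (outdeg E' j))
     = measure_pmf.expectation (add_edges k E i) (\<lambda>E''. measure_pmf.expectation
         (map_pmf (\<lambda>v. add_mset (v, k) E'') (choose_parent k E'')) (\<lambda>E'. f (outdeg E' j)))"
    by (simp only: add_edges.simps, rule exp_bind[OF fin]) (simp add: fin_cp[OF assms(1)])
  also have "\<dots> = measure_pmf.expectation (add_edges k E i) (\<lambda>E''. f (outdeg E'' j) * c i)"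
  proof (rule exp_cong)
    fix E'' assume h: "E'' \<in> set_pmf (add_edges k E i)"
    have s: "size E'' + k = size E + k + i" using add_edges_size[OF assms(1) h] by simp
    have "measure_pmf.expectation (map_pmf (\<lambda>v. add_mset (v, k) E'') (choose_parent k E'')) (\<lambda>E'. f (outdeg E' j))
       = measure_pmf.expectation (choose_parent k E'') (\<lambda>v. f (outdeg (add_mset (v, k) E'') j))" by simp
    also have "\<dots> = f (outdeg E'' j) + (real (outdeg E'' j + 1) / real (size E'' + k)) * (f (outdeg E'' j + 1) - f (outdeg E'' j))"
      by (rule exp_step[OF assms(1,2) add_edges_fst[OF assms(1,3) h]])
    also have "\<dots> = f (outdeg E'' j) * c i"
      unfolding s by (rule step)
    finally show "measure_pmf.expectation (map_pmf (\<lambda>v. add_mset (v, k) E'') (choose_parent k E'')) (\<lambda>E'. f (outdeg E' j)) = f (outdeg E'' j) * c i" .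
  qed
  also have "\<dots> = measure_pmf.expectation (add_edges k E i) (\<lambda>E''. f (outdeg E'' j)) * c i"
    by simp
  also have "\<dots> = f (outdeg E j) * (\<Prod>t<Suc i. c t)" using Suc by simp
  finally show ?case .
qed

lemma gen1: "(S::real) > 0 \<Longrightarrow> x > 0 \<Longrightarrow> x / S * ((x + 1) / x) = (x + 1) / S"
  by simp
lemma gen2: "(S::real) > 0 \<Longrightarrow> x > 0 \<Longrightarrow> x * (x + 1) / (S * (S + 1)) * ((x + 2) / x) = (x + 1) * (x + 2) / (S * (S + 1))"
  by simp

lemma prod1: "(S::real) > 0 \<Longrightarrow> (\<Prod>t<i. (S + real t + 1) / (S + real t)) = (S + real i) / S"
proof (induction i)
  case (Suc i)
  have p: "S + real i > 0" using Suc.prems by simp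
  have "(S + real i) / S * ((S + real i + 1) / (S + real i)) = (S + real i + 1) / S" using gen1[OF Suc.prems p] .
  then show ?case using Suc by (simp add: add.assoc)
qed simp

lemma prod2: "(S::real) > 0 \<Longrightarrow> (\<Prod>t<i. (S + real t + 2) / (S + real t)) = (S + real i) * (S + real i + 1) / (S * (S + 1))"
proof (induction i)
  case (Suc i)
  have p: "S + real i > 0" using Suc.prems by simp
  have "(\<Prod>t<Suc i. (S + real t + 2) / (S + real t)) = (S + real i) * (S + real i + 1) / (S * (S + 1)) * ((S + real i + 2) / (S + real i))"
    using Suc by simp
  also have "\<dots> = (S + real i + 1) * (S + real i + 2) / (S * (S + 1))" using gen2[OF Suc.prems p] by (simp add: add.assoc)
  also have "\<dots> = (S + real (Suc i)) * (S + real (Suc i) + 1) / (S * (S + 1))" by (simp add: algebra_simps)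
  finally show ?case .
qed simp

lemma add_edges_exp1:
  assumes "0<k" "j<k" "\<forall>e\<in>#E. fst e < k"
  shows "measure_pmf.expectation (add_edges k E i) (\<lambda>E'. real (outdeg E' j) + 1)
      = (real (outdeg E j) + 1) * (real (size E + k + i) / real (size E + k))"
proof -
  let ?S = "real (size E + k)"
  have S: "?S > 0" using assms(1) by simp
  have "measure_pmf.expectation (add_edges k E i) (\<lambda>E'. real (outdeg E' j) + 1)
     = (real (outdeg E j) + 1) * (\<Prod>t<i. (?S + t + 1) / (?S + t))"
    by (rule add_edges_gen[OF assms]) (use S in \<open>simp add: field_simps\<close>)
  also have "(\<Prod>t<i. (?S + t + 1) / (?S + t)) = real (size E + k + i) / ?S"
    using prod1[OF S] by simp
  finally show ?thesis .
qed

lemma add_edges_exp2: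
  assumes "0<k" "j<k" "\<forall>e\<in>#E. fst e < k"
  shows "measure_pmf.expectation (add_edges k E i) (\<lambda>E'. (real (outdeg E' j) + 1) * (real (outdeg E' j) + 2))
      = (real (outdeg E j) + 1) * (real (outdeg E j) + 2) *
        (real (size E + k + i) * real (size E + k + i + 1) / (real (size E + k) * real (size E + k + 1)))"
proof -
  let ?S = "real (size E + k)"
  have S: "?S > 0" using assms(1) by simp
  have "measure_pmf.expectation (add_edges k E i) (\<lambda>E'. (real (outdeg E' j) + 1) * (real (outdeg E' j) + 2))
     = (real (outdeg E j) + 1) * (real (outdeg E j) + 2) * (\<Prod>t<i. (?S + t + 2) / (?S + t))"
    by (rule add_edges_gen[OF assms]) (use S in \<open>simp add: field_simps\<close>)
  also have "(\<Prod>t<i. (?S + t + 2) / (?S + t)) = real (size E + k + i) * real (size E + k + i + 1) / (?S * (?S + 1))"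
    using prod2[OF S] by simp
  finally show ?thesis by simp
qed

lemma pac_finite: "finite (set_pmf (pac m n))"
  by (induction n) (auto simp: add_edges_finite)

lemma pac_supp: "E \<in> set_pmf (pac m n) \<Longrightarrow> size E = m*n \<and> (\<forall>e\<in>#E. fst e < snd e \<and> snd e \<le> n)
   \<and> (\<forall>c. indeg E c = (if 1 \<le> c \<and> c \<le> n then m else 0))"
proof (induction n arbitrary: E)
  case 0 then show ?case by (simp add: indeg_def)
next
  case (Suc n)
  from Suc.prems obtain E0 where E0: "E0 \<in> set_pmf (pac m n)" and E: "E \<in> set_pmf (add_edges (Suc n) E0 m)"
    by auto
  from add_edges_supp[OF _ E] obtain A where A: "E = E0 + A" "size A = m" "\<forall>e\<in>#A. snd e = Suc n \<and> fst e < Suc n"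
    by auto
  note IH = Suc.IH[OF E0]
  have iA: "indeg A c = (if c = Suc n then m else 0)" for c
  proof (cases "c = Suc n")
    case True
    then have "filter_mset (\<lambda>e. snd e = c) A = A" using A(3) by (subst filter_mset_eq_conv) auto
    then show ?thesis using True A(2) by (simp add: indeg_def)
  next
    case False
    then have "filter_mset (\<lambda>e. snd e = c) A = {#}" using A(3) by auto
    then show ?thesis using False by (simp add: indeg_def)
  qed
  have "size E = m * Suc n" using IH A by simp
  moreover have "\<forall>e\<in>#E. fst e < snd e \<and> snd e \<le> Suc n"
  proof
    fix e assume "e \<in># E"
    then have "e \<in># E0 \<or> e \<in># A" using A(1) by simp
    then show "fst e < snd e \<and> snd e \<le> Suc n" using IH A(3) by fastforce
  qed
  moreover have "\<forall>c. indeg E c = (if 1 \<le> c \<and> c \<le> Suc n then m else 0)"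
  proof
    fix c
    have "indeg E c = indeg E0 c + indeg A c" using A(1) by (simp add: indeg_plus)
    then show "indeg E c = (if 1 \<le> c \<and> c \<le> Suc n then m else 0)"
      using IH iA[of c] by (simp add: le_Suc_eq)
  qed
  ultimately show ?case by blast
qed

definition G1 :: "real \<Rightarrow> nat \<Rightarrow> nat \<Rightarrow> real" where
  "G1 a j n = Gamma (real n + 1) * Gamma (real j + a) / (Gamma (real n + a) * Gamma (real j + 1))"

definition G2 :: "real \<Rightarrow> nat \<Rightarrow> nat \<Rightarrow> real" where
  "G2 a j n = 2 * Gamma (real n + 1) * (real n + a) * Gamma (real j + 2 * a) /
     (Gamma (real j + 1) * (real j + a) * Gamma (real n + 2 * a))"

lemma Gnz: "x > 0 \<Longrightarrow> Gamma (x::real) \<noteq> 0"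
  by (metis Gamma_real_pos less_irrefl)

lemma G1_base: "a > 0 \<Longrightarrow> G1 a j j = 1"
proof -
  assume "a > 0"
  then have "Gamma (real j + a) \<noteq> 0" "Gamma (real j + 1) \<noteq> 0" by (auto intro!: Gnz)
  then show ?thesis by (simp add: G1_def)
qed

lemma G2_base: "a > 0 \<Longrightarrow> G2 a j j = 2"
proof -
  assume "a > 0"
  then have "Gamma (real j + 2 * a) \<noteq> 0" "Gamma (real j + 1) \<noteq> 0" "real j + a > 0" by (auto intro!: Gnz)
  then show ?thesis by (simp add: G2_def)
qed

lemma G1_step: "a > 0 \<Longrightarrow> G1 a j (Suc n) = G1 a j n * ((real n + 1) / (real n + a))"
proof -
  assume a: "a > 0"
  have g1: "Gamma (real (Suc n) + 1) = (real n + 1) * Gamma (real n + 1)"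
    using Gp1[of "real n + 1"] by (simp add: add.commute add.left_commute)
  have g2: "Gamma (real (Suc n) + a) = (real n + a) * Gamma (real n + a)"
    using Gp1[of "real n + a"] a by (simp add: add.commute add.left_commute)
  have p: "Gamma (real n + a) \<noteq> 0" "real n + a > 0" "Gamma (real j + 1) \<noteq> 0" using a by (auto intro!: Gnz)
  show ?thesis unfolding G1_def g1 g2 using p by (simp add: field_simps)
qed

lemma g2alg:
  fixes A J2 J1 ja N u v w p :: real
  assumes "J1 \<noteq> 0" "ja \<noteq> 0" "N \<noteq> 0" "u \<noteq> 0" "v \<noteq> 0"
  shows "2 * (p * A) * w * J2 / (J1 * ja * (v * N))
       = 2 * A * u * J2 / (J1 * ja * N) * (p * w / (u * v))"
  using assms by (simp add: field_simps)

lemma G2_step: "a > 0 \<Longrightarrow> G2 a j (Suc n) = G2 a j n * ((real n + 1) * (real n + 1 + a) / ((real n + a) * (real n + 2 * a)))"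
proof -
  assume a: "a > 0"
  have g1: "Gamma (real (Suc n) + 1) = (real n + 1) * Gamma (real n + 1)"
    using Gp1[of "real n + 1"] by (simp add: add.commute add.left_commute)
  have g2: "Gamma (real (Suc n) + 2 * a) = (real n + 2 * a) * Gamma (real n + 2 * a)"
    using Gp1[of "real n + 2 * a"] a by (simp add: add_ac)
  have p: "Gamma (real n + 2 * a) \<noteq> 0" "real n + a > 0" "real n + 2 * a > 0" "Gamma (real j + 1) \<noteq> 0" "real j + a > 0"
    using a by (auto intro!: Gnz)
  have e: "G2 a j (Suc n) = 2 * ((real n + 1) * Gamma (real n + 1)) * (real n + 1 + a) * Gamma (real j + 2 * a)
      / (Gamma (real j + 1) * (real j + a) * ((real n + 2 * a) * Gamma (real n + 2 * a)))"
    unfolding G2_def g1 g2 by (simp add: add_ac)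
  show ?thesis
    by (subst e, unfold G2_def, rule g2alg) (use p in auto)
qed

lemma ratio1:
  fixes M n :: real
  assumes "M \<ge> 0" "n \<ge> 0"
  shows "(n + 1) / (n + 1 / (M + 1)) = (M * n + (n + 1) + M) / (M * n + (n + 1))"
proof -
  have M1: "M + 1 > 0" using assms by simp
  have S: "M * n + (n + 1) > 0" using assms by (simp add: add_nonneg_pos)
  have e: "n + 1 / (M + 1) = (M * n + (n + 1)) / (M + 1)" using M1 by (simp add: field_simps)
  show ?thesis unfolding e using M1 S by (simp add: field_simps)
qed

lemma ratio2:
  fixes M n :: real
  assumes "M \<ge> 0" "n \<ge> 0"
  shows "(n + 1) * (n + 1 + 1 / (M + 1)) / ((n + 1 / (M + 1)) * (n + 2 * (1 / (M + 1))))
     = (M * n + (n + 1) + M) * (M * n + (n + 1) + M + 1) / ((M * n + (n + 1)) * (M * n + (n + 1) + 1))"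
proof -
  have M1: "M + 1 > 0" using assms by simp
  have S: "M * n + (n + 1) > 0" using assms by (simp add: add_nonneg_pos)
  have e1: "n + 1 / (M + 1) = (M * n + (n + 1)) / (M + 1)" using M1 by (simp add: field_simps)
  have e2: "n + 2 * (1 / (M + 1)) = (M * n + (n + 1) + 1) / (M + 1)" using M1 by (simp add: field_simps)
  have e3: "n + 1 + 1 / (M + 1) = (M * n + (n + 1) + M + 1) / (M + 1)" using M1 by (simp add: field_simps)
  have e4: "n + 1 = (M * n + (n + 1) + M) / (M + 1)" using M1 by (simp add: field_simps)
  have S1: "M * n + (n + 1) + 1 > 0" using S by simp
  show ?thesis unfolding e1 e2 e3 using M1 S S1 by (subst e4) (simp add: field_simps)
qed

lemma pac_outdeg_self: "E \<in> set_pmf (pac m n) \<Longrightarrow> outdeg E n = 0"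
proof -
  assume "E \<in> set_pmf (pac m n)"
  then have "\<forall>e\<in>#E. fst e < snd e \<and> snd e \<le> n" using pac_supp by blast
  then have "filter_mset (\<lambda>e. fst e = n) E = {#}" by fastforce
  then show ?thesis by (simp add: outdeg_def)
qed

lemma pac_bind_exp:
  fixes h :: "graph \<Rightarrow> real"
  shows "measure_pmf.expectation (pac m (Suc n)) h
     = measure_pmf.expectation (pac m n) (\<lambda>E. measure_pmf.expectation (add_edges (Suc n) E m) h)"
  by (simp only: pac.simps, rule exp_bind[OF pac_finite]) (simp add: add_edges_finite)

lemma pac_fst: "E \<in> set_pmf (pac m n) \<Longrightarrow> \<forall>e\<in>#E. fst e < Suc n"
proof -
  assume "E \<in> set_pmf (pac m n)"
  then have "\<forall>e\<in>#E. fst e < snd e \<and> snd e \<le> n" using pac_supp by blast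
  then show ?thesis by (meson less_Suc_eq_le order.strict_trans2 less_imp_le)
qed

lemma pac_exp1:
  assumes "j \<le> n"
  shows "measure_pmf.expectation (pac m n) (\<lambda>E. real (outdeg E j) + 1) = G1 (1 / (real m + 1)) j n"
  using assms
proof (induction n)
  case 0
  then have j: "j = 0" by simp
  have "measure_pmf.expectation (pac m 0) (\<lambda>E. real (outdeg E j) + 1) = measure_pmf.expectation (pac m 0) (\<lambda>E. 1)"
    by (rule exp_cong) (use pac_outdeg_self[of _ m 0] j in simp)
  then show ?case using G1_base[of "1 / (real m + 1)" 0] j by simp
next
  case (Suc n)
  let ?a = "1 / (real m + 1)"
  have a: "?a > 0" by simp
  show ?case
  proof (cases "j = Suc n")
    case True
    have "measure_pmf.expectation (pac m (Suc n)) (\<lambda>E. real (outdeg E j) + 1) = measure_pmf.expectation (pac m (Suc n)) (\<lambda>E. 1)"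
      by (rule exp_cong) (use pac_outdeg_self[of _ m "Suc n"] True in simp)
    then show ?thesis using G1_base[OF a, of j] True by simp
  next
    case False
    then have jn: "j \<le> n" using Suc.prems by simp
    let ?r = "real (m * n + Suc n + m) / real (m * n + Suc n)"
    have "measure_pmf.expectation (pac m (Suc n)) (\<lambda>E. real (outdeg E j) + 1)
       = measure_pmf.expectation (pac m n) (\<lambda>E. measure_pmf.expectation (add_edges (Suc n) E m) (\<lambda>E'. real (outdeg E' j) + 1))"
      by (rule pac_bind_exp)
    also have "\<dots> = measure_pmf.expectation (pac m n) (\<lambda>E. (real (outdeg E j) + 1) * ?r)"
    proof (rule exp_cong)
      fix E assume h: "E \<in> set_pmf (pac m n)"
      have sz: "size E = m * n" using pac_supp[OF h] by blast
      show "measure_pmf.expectation (add_edges (Suc n) E m) (\<lambda>E'. real (outdeg E' j) + 1) = (real (outdeg E j) + 1) * ?r"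
        using add_edges_exp1[OF _ _ pac_fst[OF h], of j m] jn sz by simp
    qed
    also have "\<dots> = measure_pmf.expectation (pac m n) (\<lambda>E. real (outdeg E j) + 1) * ?r" by simp
    also have "\<dots> = G1 ?a j n * ?r" using Suc.IH[OF jn] by simp
    also have "?r = (real n + 1) / (real n + ?a)"
      using ratio1[of "real m" "real n"] by (simp add: algebra_simps)
    finally show ?thesis using G1_step[OF a, of j n] by simp
  qed
qed

lemma pac_exp2:
  assumes "j \<le> n"
  shows "measure_pmf.expectation (pac m n) (\<lambda>E. (real (outdeg E j) + 1) * (real (outdeg E j) + 2)) = G2 (1 / (real m + 1)) j n"
  using assms
proof (induction n)
  case 0
  then have j: "j = 0" by simp
  have "measure_pmf.expectation (pac m 0) (\<lambda>E. (real (outdeg E j) + 1) * (real (outdeg E j) + 2)) = measure_pmf.expectation (pac m 0) (\<lambda>E. 2)"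
    by (rule exp_cong) (use pac_outdeg_self[of _ m 0] j in simp)
  then show ?case using G2_base[of "1 / (real m + 1)" 0] j by simp
next
  case (Suc n)
  let ?a = "1 / (real m + 1)"
  have a: "?a > 0" by simp
  show ?case
  proof (cases "j = Suc n")
    case True
    have "measure_pmf.expectation (pac m (Suc n)) (\<lambda>E. (real (outdeg E j) + 1) * (real (outdeg E j) + 2)) = measure_pmf.expectation (pac m (Suc n)) (\<lambda>E. 2)"
      by (rule exp_cong) (use pac_outdeg_self[of _ m "Suc n"] True in simp)
    then show ?thesis using G2_base[OF a, of j] True by simp
  next
    case False
    then have jn: "j \<le> n" using Suc.prems by simp
    let ?r = "real (m * n + Suc n + m) * real (m * n + Suc n + m + 1) / (real (m * n + Suc n) * real (m * n + Suc n + 1))"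
    have "measure_pmf.expectation (pac m (Suc n)) (\<lambda>E. (real (outdeg E j) + 1) * (real (outdeg E j) + 2))
       = measure_pmf.expectation (pac m n) (\<lambda>E. measure_pmf.expectation (add_edges (Suc n) E m) (\<lambda>E'. (real (outdeg E' j) + 1) * (real (outdeg E' j) + 2)))"
      by (rule pac_bind_exp)
    also have "\<dots> = measure_pmf.expectation (pac m n) (\<lambda>E. (real (outdeg E j) + 1) * (real (outdeg E j) + 2) * ?r)"
    proof (rule exp_cong)
      fix E assume h: "E \<in> set_pmf (pac m n)"
      have sz: "size E = m * n" using pac_supp[OF h] by blast
      show "measure_pmf.expectation (add_edges (Suc n) E m) (\<lambda>E'. (real (outdeg E' j) + 1) * (real (outdeg E' j) + 2)) = (real (outdeg E j) + 1) * (real (outdeg E j) + 2) * ?r"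
        using add_edges_exp2[OF _ _ pac_fst[OF h], of j m] jn sz by simp
    qed
    also have "\<dots> = measure_pmf.expectation (pac m n) (\<lambda>E. (real (outdeg E j) + 1) * (real (outdeg E j) + 2)) * ?r" by simp
    also have "\<dots> = G2 ?a j n * ?r" using Suc.IH[OF jn] by simp
    also have "?r = (real n + 1) * (real n + 1 + ?a) / ((real n + ?a) * (real n + 2 * ?a))"
      using ratio2[of "real m" "real n"] by (simp add: algebra_simps)
    finally show ?thesis using G2_step[OF a, of j n] by simp
  qed
qed

lemma alg:
  fixes A Na N2 J1 Ja J2 M n j a :: real
  assumes "Na > 0" "N2 > 0" "J1 > 0" "M \<ge> 0" "n \<ge> 0" "j \<ge> 0" "a = 1 / (M + 1)"
  shows "2 * A * (n + a) * J2 / (J1 * (j + a) * N2) - A * Ja / (Na * J1) - (A * Ja / (Na * J1))^2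
   = A / (((M + 1) * j + 1) * Na^2 * J1^2 * N2) *
     (2 * ((M + 1) * n + 1) * J1 * Na^2 * J2 - ((M + 1) * j + 1) * (A * N2 * Ja^2 + N2 * Na * J1 * Ja))"
proof -
  define p where "p = (M + 1) * n + 1"
  define q where "q = (M + 1) * j + 1"
  have M1: "M + 1 > 0" using assms by simp
  have q: "q > 0" unfolding q_def using assms by (simp add: add_nonneg_pos)
  have ja: "j + a = q / (M+1)" "n + a = p/(M+1)" unfolding p_def q_def using M1 assms(7) by (auto simp: field_simps)
  have e0: "2 * A * (n + a) * J2 / (J1 * (j + a) * N2) = 2 * A * p * J2 / (J1 * q * N2)"
  proof -
    have r: "(n + a) / (j + a) = p / q" unfolding ja using M1 by simp
    have ja0: "j + a > 0" unfolding ja using M1 q by simp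
    have "2 * A * (n + a) * J2 / (J1 * (j + a) * N2) = 2 * A * J2 / (J1 * N2) * ((n + a) / (j + a))"
      using ja0 assms(2,3) by (simp add: field_simps)
    also have "\<dots> = 2 * A * p * J2 / (J1 * q * N2)" unfolding r using q assms(2,3) by (simp add: field_simps)
    finally show ?thesis .
  qed
  have e1: "A / (q * Na^2 * J1^2 * N2) * (2 * p * J1 * Na^2 * J2) = 2 * A * p * J2 / (J1 * q * N2)"
    using assms(1-3) q by (simp add: field_simps power2_eq_square)
  have e2: "A / (q * Na^2 * J1^2 * N2) * (q * (A * N2 * Ja^2 + N2 * Na * J1 * Ja)) = (A * Ja / (Na * J1))^2 + A * Ja / (Na * J1)"
    using assms(1-3) q by (simp add: field_simps power2_eq_square)
  have "A / (q * Na^2 * J1^2 * N2) * (2 * p * J1 * Na^2 * J2 - q * (A * N2 * Ja^2 + N2 * Na * J1 * Ja))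
     = A / (q * Na^2 * J1^2 * N2) * (2 * p * J1 * Na^2 * J2) - A / (q * Na^2 * J1^2 * N2) * (q * (A * N2 * Ja^2 + N2 * Na * J1 * Ja))"
    by (rule right_diff_distrib)
  then show ?thesis unfolding e0 e1 e2 p_def[symmetric] q_def[symmetric] by simp
qed

theorem theorem4:
  fixes m n j :: nat
  assumes "m \<ge> 1" and "j \<le> n"
  defines "a \<equiv> 1 / (real m + 1)"
  shows "measure_pmf.expectation (pac m n) (\<lambda>E. real (degree E j)) =
           Gamma (real n + 1) * Gamma (real j + a) / (Gamma (real n + a) * Gamma (real j + 1))
           - 1 + real m * (1 - (if j = 0 then 1 else 0)) \<and>
         measure_pmf.variance (pac m n) (\<lambda>E. real (degree E j)) =
           Gamma (real n + 1) /
             (((real m + 1) * real j + 1) * (Gamma (real n + a))^2 * (Gamma (real j + 1))^2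
              * Gamma (real n + 2 * a))
           * (2 * ((real m + 1) * real n + 1) * Gamma (real j + 1) * (Gamma (real n + a))^2
                * Gamma (real j + 2 * a)
              - ((real m + 1) * real j + 1) *
                (Gamma (real n + 1) * Gamma (real n + 2 * a) * (Gamma (real j + a))^2
                 + Gamma (real n + 2 * a) * Gamma (real n + a) * Gamma (real j + 1)
                   * Gamma (real j + a)))"
proof -
  let ?p = "pac m n"
  let ?c = "real m * (1 - (if j = 0 then 1 else 0))"
  have int: "integrable (measure_pmf ?p) (f :: graph \<Rightarrow> real)" for f
    by (rule integrable_measure_pmf_finite[OF pac_finite])
  have deg: "real (degree E j) = (real (outdeg E j) + 1) - 1 + ?c" if h: "E \<in> set_pmf ?p" for E
  proof -
    have "indeg E j = (if 1 \<le> j \<and> j \<le> n then m else 0)" using pac_supp[OF h] by blast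
    then show ?thesis using assms(2) by (simp add: degree_def)
  qed
  have E1: "measure_pmf.expectation ?p (\<lambda>E. real (outdeg E j) + 1) = G1 a j n"
    using pac_exp1[OF assms(2)] unfolding a_def .
  have E2: "measure_pmf.expectation ?p (\<lambda>E. (real (outdeg E j) + 1) * (real (outdeg E j) + 2)) = G2 a j n"
    using pac_exp2[OF assms(2)] unfolding a_def .
  have mean: "measure_pmf.expectation ?p (\<lambda>E. real (degree E j)) = G1 a j n - 1 + ?c"
  proof -
    have "measure_pmf.expectation ?p (\<lambda>E. real (degree E j))
        = measure_pmf.expectation ?p (\<lambda>E. (real (outdeg E j) + 1) + (?c - 1))"
      by (rule exp_cong) (simp add: deg)
    also have "\<dots> = measure_pmf.expectation ?p (\<lambda>E. real (outdeg E j) + 1) + (?c - 1)"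
      by (subst Bochner_Integration.integral_add[OF int int]) simp
    finally show ?thesis using E1 by simp
  qed
  let ?G = "G1 a j n"
  have var: "measure_pmf.variance ?p (\<lambda>E. real (degree E j)) = G2 a j n - ?G - ?G^2"
  proof -
    have "measure_pmf.variance ?p (\<lambda>E. real (degree E j))
       = measure_pmf.expectation ?p (\<lambda>E. (real (outdeg E j) + 1) * (real (outdeg E j) + 2)
            - (1 + 2 * ?G) * (real (outdeg E j) + 1) + ?G^2)"
    proof (rule exp_cong)
      fix E assume h: "E \<in> set_pmf ?p"
      show "(real (degree E j) - measure_pmf.expectation ?p (\<lambda>E. real (degree E j)))^2
         = (real (outdeg E j) + 1) * (real (outdeg E j) + 2) - (1 + 2 * ?G) * (real (outdeg E j) + 1) + ?G^2"
        unfolding mean deg[OF h] by (simp add: power2_eq_square algebra_simps)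
    qed
    also have "\<dots> = measure_pmf.expectation ?p (\<lambda>E. (real (outdeg E j) + 1) * (real (outdeg E j) + 2))
        - (1 + 2 * ?G) * measure_pmf.expectation ?p (\<lambda>E. real (outdeg E j) + 1) + ?G^2"
      by (subst Bochner_Integration.integral_add[OF int int], subst Bochner_Integration.integral_diff[OF int int]) simp
    also have "\<dots> = G2 a j n - ?G - ?G^2" unfolding E1 E2 by (simp add: algebra_simps power2_eq_square)
    finally show ?thesis .
  qed
  have apos: "a > 0" unfolding a_def by simp
  have alg': "G2 a j n - ?G - ?G^2 =
           Gamma (real n + 1) /
             (((real m + 1) * real j + 1) * (Gamma (real n + a))^2 * (Gamma (real j + 1))^2
              * Gamma (real n + 2 * a))
           * (2 * ((real m + 1) * real n + 1) * Gamma (real j + 1) * (Gamma (real n + a))^2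
                * Gamma (real j + 2 * a)
              - ((real m + 1) * real j + 1) *
                (Gamma (real n + 1) * Gamma (real n + 2 * a) * (Gamma (real j + a))^2
                 + Gamma (real n + 2 * a) * Gamma (real n + a) * Gamma (real j + 1)
                   * Gamma (real j + a)))"
  proof -
    have aeq: "a = 1 / (real m + 1)" by (simp add: a_def)
    have pos: "real n + a > 0" "real n + 2 * a > 0" "real j + 1 > 0" using apos by simp_all
    show ?thesis unfolding G1_def G2_def
      by (rule alg[OF Gamma_real_pos Gamma_real_pos Gamma_real_pos _ _ _ aeq]) (use pos in simp_all)
  qed
  show ?thesis using mean var alg' unfolding G1_def by simp
qed

end
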